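(* Let $X$ be a random variable with CDF $F$ and mean $\mu=\mathbb{E}X$, and let $1\le i\le n$ be integers. Each of the following conditions implies $\mathbb{E}X_{i:n}\geq\mu$: 1. $F$ is ID (i.e. $F^{-1}$ is concave on $(0,1)$) and $\frac{i}{n+1}\geq\frac12$; 2. $F$ is ILOR (i.e. $F^{-1}\circ L$ is concave on $\mathbb{R}$, where $L(x)=\frac{1}{1+e^{-x}}$) and $\psi(i)-\psi(n-i+1)\geq 0$; 3. $F$ is IHR (i.e. $F^{-1}\circ\mathcal{E}$ is concave on $(0,\infty)$, where $\mathcal{E}(x)=1-e^{-x}$) and $\sum_{k=n-i+1}^{n}\frac1k\geq 1$.
   Context: $F^{-1}(p)=\inf\{x:F(x)\ge p\}$ is the quantile function. $X_{i:n}$ is the $i$-th order statistic of an i.i.d. sample of size $n$ from $F$. $\psi$ denotes the digamma function. ID: increasing density (convex CDF); ILOR: increasing log-odds rate (convex log-odds $\log\frac{F}{1-F}$); IHR: increasing hazard rate (convex $-\log(1-F)$); the precise definitions used are those given in the claim in terms of the quantile function. *)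

theory Defs
  imports "HOL-Probability.Probability"
begin

definition quantile :: "(real \<Rightarrow> real) \<Rightarrow> real \<Rightarrow> real" where
  "quantile F p = Inf {x. F x \<ge> p}"

definition logistic :: "real \<Rightarrow> real" where
  "logistic x = 1 / (1 + exp (- x))"

definition expcdf :: "real \<Rightarrow> real" where
  "expcdf x = 1 - exp (- x)"

definition order_stat :: "nat \<Rightarrow> nat \<Rightarrow> (nat \<Rightarrow> real) \<Rightarrow> real" where
  "order_stat i n x = sort (map x [0..<n]) ! (i - 1)"

end

theory Submission
  imports Defs "HOL-Real_Asymp.Real_Asymp"
begin
lemma sorted_nth_le_iff:
  assumes "sorted s" "1 \<le> i" "i \<le> length s"
  shows "s ! (i - 1) \<le> t \<longleftrightarrow> i \<le> length (filter (\<lambda>y. y \<le> t) s)"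
proof
  assume h: "s ! (i - 1) \<le> t"
  have "{0..<i} \<subseteq> {j. j < length s \<and> s ! j \<le> t}"
  proof
    fix j assume "j \<in> {0..<i}"
    then have "j \<le> i - 1" "j < length s" using assms by auto
    then have "s ! j \<le> s ! (i - 1)" using assms sorted_nth_mono by (metis diff_less less_le_trans zero_less_one le_less_trans)
    then show "j \<in> {j. j < length s \<and> s ! j \<le> t}" using h \<open>j < length s\<close> by auto
  qed
  then have "card {0..<i} \<le> card {j. j < length s \<and> s ! j \<le> t}"
    by (intro card_mono) auto
  then show "i \<le> length (filter (\<lambda>y. y \<le> t) s)"
    by (simp add: length_filter_conv_card)
next
  assume h: "i \<le> length (filter (\<lambda>y. y \<le> t) s)"
  show "s ! (i - 1) \<le> t"
  proof (rule ccontr)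
    assume "\<not> s ! (i - 1) \<le> t"
    then have "{j. j < length s \<and> s ! j \<le> t} \<subseteq> {0..<i-1}"
    proof (intro subsetI)
      fix j assume j: "j \<in> {j. j < length s \<and> s ! j \<le> t}" and nt: "\<not> s ! (i - 1) \<le> t"
      show "j \<in> {0..<i-1}"
      proof (rule ccontr)
        assume "j \<notin> {0..<i-1}"
        then have "i - 1 \<le> j" by auto
        then have "s ! (i-1) \<le> s ! j" using j assms sorted_nth_mono by auto
        then show False using j nt by auto
      qed
    qed
    then have "card {j. j < length s \<and> s ! j \<le> t} \<le> i - 1"
      using card_mono[of "{0..<i-1}"] by fastforce
    then show False using h assms by (simp add: length_filter_conv_card)
  qed
qed

lemma order_stat_le_iff:
  assumes "1 \<le> i" "i \<le> n"
  shows "order_stat i n x \<le> t \<longleftrightarrow> i \<le> card {j. j < n \<and> x j \<le> t}"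
proof -
  let ?xs = "map x [0..<n]"
  have "order_stat i n x \<le> t \<longleftrightarrow> i \<le> length (filter (\<lambda>y. y \<le> t) (sort ?xs))"
    unfolding order_stat_def using assms by (intro sorted_nth_le_iff) auto
  also have "length (filter (\<lambda>y. y \<le> t) (sort ?xs)) = length (filter (\<lambda>y. y \<le> t) ?xs)"
    by (metis mset_filter mset_sort size_mset)
  also have "\<dots> = card {j. j < n \<and> x j \<le> t}"
    by (auto simp: length_filter_conv_card intro!: arg_cong[where f=card])
  finally show ?thesis .
qed

lemma sum_subsets_card:
  fixes f :: "nat \<Rightarrow> real"
  assumes "finite A" "i \<le> card A"
  shows "(\<Sum>S\<in>{S. S \<subseteq> A \<and> i \<le> card S}. f (card S)) = (\<Sum>k=i..card A. real (card A choose k) * f k)"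
proof -
  have fin: "finite {S. S \<subseteq> A \<and> i \<le> card S}" using assms by auto
  have img: "card ` {S. S \<subseteq> A \<and> i \<le> card S} \<subseteq> {i..card A}"
    using assms by (auto intro: card_mono)
  have "(\<Sum>S\<in>{S. S \<subseteq> A \<and> i \<le> card S}. f (card S)) =
     (\<Sum>k\<in>{i..card A}. \<Sum>S\<in>{S \<in> {S. S \<subseteq> A \<and> i \<le> card S}. card S = k}. f (card S))"
    by (rule sum.group[OF fin _ img, symmetric]) simp
  also have "\<dots> = (\<Sum>k\<in>{i..card A}. real (card A choose k) * f k)"
  proof (rule sum.cong[OF refl])
    fix k assume k: "k \<in> {i..card A}"
    have "{S \<in> {S. S \<subseteq> A \<and> i \<le> card S}. card S = k} = {S. S \<subseteq> A \<and> card S = k}"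
      using k by auto
    then have "(\<Sum>S\<in>{S \<in> {S. S \<subseteq> A \<and> i \<le> card S}. card S = k}. f (card S))
        = (\<Sum>S\<in>{S. S \<subseteq> A \<and> card S = k}. f k)" by simp
    also have "\<dots> = real (card A choose k) * f k"
      using n_subsets[OF assms(1), of k] by simp
    finally show "(\<Sum>S\<in>{S \<in> {S. S \<subseteq> A \<and> i \<le> card S}. card S = k}. f (card S)) = real (card A choose k) * f k" .
  qed
  finally show ?thesis .
qed

lemma prob_count_ge:
  fixes M :: "real measure"
  assumes M: "real_distribution M" and i: "i \<le> n"
  shows "measure (PiM {..<n} (\<lambda>_. M)) {x \<in> space (PiM {..<n} (\<lambda>_. M)). i \<le> card {j. j < n \<and> x j \<le> t}}
     = (\<Sum>k=i..n. real (n choose k) * (cdf M t)^k * (1 - cdf M t)^(n-k))"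
proof -
  interpret real_distribution M by fact
  interpret P: product_prob_space "\<lambda>_. M" "{..<n}" by unfold_locales
  let ?P = "PiM {..<n} (\<lambda>_. M)"
  let ?p = "cdf M t"
  define E where "E S = {x \<in> space ?P. \<forall>j\<in>{..<n}. x j \<in> (if j \<in> S then {..t} else {t<..})}" for S
  let ?SS = "{S. S \<subseteq> {..<n} \<and> i \<le> card S}"
  have eq: "{x \<in> space ?P. i \<le> card {j. j < n \<and> x j \<le> t}} = (\<Union>S\<in>?SS. E S)"
  proof (intro equalityI subsetI)
    fix x assume x: "x \<in> {x \<in> space ?P. i \<le> card {j. j < n \<and> x j \<le> t}}"
    then have "{j. j < n \<and> x j \<le> t} \<in> ?SS" by auto
    moreover have "x \<in> E {j. j < n \<and> x j \<le> t}" using x by (auto simp: E_def)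
    ultimately show "x \<in> (\<Union>S\<in>?SS. E S)" by blast
  next
    fix x assume "x \<in> (\<Union>S\<in>?SS. E S)"
    then obtain S where S: "S \<in> ?SS" "x \<in> E S" by blast
    then have "{j. j < n \<and> x j \<le> t} = S"
      unfolding E_def by safe (metis atMost_iff greaterThan_iff lessThan_iff not_less subsetD)+
    then show "x \<in> {x \<in> space ?P. i \<le> card {j. j < n \<and> x j \<le> t}}" using S by (auto simp: E_def)
  qed
  have disj: "disjoint_family_on E ?SS"
    unfolding disjoint_family_on_def E_def by auto (meson lessThan_iff not_le subsetD)+
  have Esets: "E S \<in> sets ?P" for S
  proof -
    have [measurable]: "(if j \<in> S then {..t} else {t<..}) \<in> sets borel" for j by auto
    show ?thesis unfolding E_def by measurable
  qed
  have Emeas: "measure ?P (E S) = ?p ^ card S * (1 - ?p) ^ (n - card S)" if S: "S \<subseteq> {..<n}" for S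
  proof -
    have "emeasure ?P (E S) = (\<Prod>j\<in>{..<n}. emeasure M (if j \<in> S then {..t} else {t<..}))"
      unfolding E_def by (rule P.emeasure_PiM_Collect) auto
    also have "\<dots> = (\<Prod>j\<in>{..<n}. ennreal (if j \<in> S then ?p else 1 - ?p))"
    proof (rule prod.cong[OF refl])
      fix j
      have "measure M {t<..} = 1 - ?p"
        using prob_compl[of "{..t}"] by (simp add: cdf_def Compl_eq_Diff_UNIV[symmetric] Compl_atMost)
      then show "emeasure M (if j \<in> S then {..t} else {t<..}) = ennreal (if j \<in> S then ?p else 1 - ?p)"
        by (auto simp: emeasure_eq_measure cdf_def)
    qed
    also have "\<dots> = ennreal (\<Prod>j\<in>{..<n}. (if j \<in> S then ?p else 1 - ?p))"
      by (rule prod_ennreal) (auto simp: cdf_nonneg cdf_bounded_prob)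
    also have "(\<Prod>j\<in>{..<n}. (if j \<in> S then ?p else 1 - ?p)) = ?p ^ card S * (1 - ?p) ^ (n - card S)"
    proof -
      have "(\<Prod>j\<in>{..<n}. (if j \<in> S then ?p else 1 - ?p)) = (\<Prod>j\<in>S. ?p) * (\<Prod>j\<in>{..<n} - S. 1 - ?p)"
        using S by (subst prod.If_cases) (auto simp: Int_absorb1 Diff_eq)
      also have "\<dots> = ?p ^ card S * (1 - ?p) ^ (n - card S)"
        using S by (simp add: card_Diff_subset finite_subset)
      finally show ?thesis .
    qed
    finally show ?thesis
      by (simp add: measure_def cdf_nonneg cdf_bounded_prob)
  qed
  have "measure ?P {x \<in> space ?P. i \<le> card {j. j < n \<and> x j \<le> t}} = (\<Sum>S\<in>?SS. measure ?P (E S))"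
    unfolding eq by (rule measure_finite_Union) (auto simp: Esets disj)
  also have "\<dots> = (\<Sum>S\<in>?SS. ?p ^ card S * (1 - ?p) ^ (n - card S))"
    by (rule sum.cong) (auto simp: Emeas)
  also have "\<dots> = (\<Sum>k=i..n. real (n choose k) * (?p ^ k * (1 - ?p) ^ (n - k)))"
    using sum_subsets_card[of "{..<n}" i "\<lambda>k. ?p ^ k * (1 - ?p) ^ (n - k)"] i by simp
  finally show ?thesis by (simp add: mult.assoc)
qed

lemma card_eq_sum_if: "real (card {j. j < (n::nat) \<and> P j}) = (\<Sum>j<n. if P j then 1 else 0)"
proof -
  have "(\<Sum>j<n. if P j then (1::real) else 0) = (\<Sum>j\<in>{j. j < n \<and> P j}. 1)"
    by (subst sum.If_cases) (auto intro!: sum.cong simp: Int_def)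
  then show ?thesis by simp
qed

lemma order_stat_measurable:
  fixes M :: "real measure"
  assumes "sets M = sets borel" "1 \<le> i" "i \<le> n"
  shows "order_stat i n \<in> borel_measurable (PiM {..<n} (\<lambda>_. M))"
proof (subst borel_measurable_iff_le, intro allI)
  fix t
  have [measurable]: "(\<lambda>x. \<Sum>j<n. if x j \<le> t then 1 else 0 :: real) \<in> borel_measurable (PiM {..<n} (\<lambda>_. M))"
    using assms(1) by measurable
  have "{w \<in> space (PiM {..<n} (\<lambda>_. M)). order_stat i n w \<le> t}
      = {w \<in> space (PiM {..<n} (\<lambda>_. M)). real i \<le> (\<Sum>j<n. if w j \<le> t then 1 else 0)}"
    using assms by (simp add: order_stat_le_iff card_eq_sum_if[symmetric])
  also have "\<dots> \<in> sets (PiM {..<n} (\<lambda>_. M))" by measurable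
  finally show "{w \<in> space (PiM {..<n} (\<lambda>_. M)). order_stat i n w \<le> t} \<in> sets (PiM {..<n} (\<lambda>_. M))" .
qed

definition Bin :: "nat \<Rightarrow> nat \<Rightarrow> real \<Rightarrow> real" where
  "Bin i n p = (\<Sum>k=i..n. real (n choose k) * p^k * (1-p)^(n-k))"

lemma cdf_order_stat:
  fixes M :: "real measure"
  assumes M: "real_distribution M" and i: "1 \<le> i" "i \<le> n"
  shows "cdf (distr (PiM {..<n} (\<lambda>_. M)) borel (order_stat i n)) t = Bin i n (cdf M t)"
proof -
  interpret real_distribution M by fact
  have [measurable]: "order_stat i n \<in> borel_measurable (PiM {..<n} (\<lambda>_. M))"
    using order_stat_measurable[of M i n] i by simp
  have "cdf (distr (PiM {..<n} (\<lambda>_. M)) borel (order_stat i n)) t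
     = measure (PiM {..<n} (\<lambda>_. M)) {x \<in> space (PiM {..<n} (\<lambda>_. M)). order_stat i n x \<le> t}"
    unfolding cdf_def by (subst measure_distr) (auto intro!: arg_cong2[where f=measure])
  also have "\<dots> = measure (PiM {..<n} (\<lambda>_. M)) {x \<in> space (PiM {..<n} (\<lambda>_. M)). i \<le> card {j. j < n \<and> x j \<le> t}}"
    using i by (simp add: order_stat_le_iff)
  also have "\<dots> = Bin i n (cdf M t)"
    unfolding Bin_def by (rule prob_count_ge[OF M i(2)])
  finally show ?thesis .
qed

definition bet :: "nat \<Rightarrow> nat \<Rightarrow> real \<Rightarrow> real" where
  "bet i n u = real n * real ((n-1) choose (i-1)) * u^(i-1) * (1-u)^(n-i)"

lemma Bin_split: "i < n \<Longrightarrow> Bin i n p = real (n choose i) * p^i * (1-p)^(n-i) + Bin (Suc i) n p"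
  unfolding Bin_def by (simp add: sum.atLeast_Suc_atMost)

lemma Bin_top: "Bin n n p = p ^ n"
  unfolding Bin_def by simp

lemma term_deriv:
  assumes "1 \<le> i" "i < n"
  shows "((\<lambda>p. real (n choose i) * p^i * (1-p)^(n-i)) has_real_derivative
     bet i n p - bet (Suc i) n p) (at p)"
proof -
  obtain k where k: "i = Suc k" using assms by (cases i) auto
  obtain m where m: "n - i = Suc m" using assms by (cases "n - i") auto
  have "(n choose i) * i = n * ((n-1) choose (i-1))"
    using binomial_absorption[of k n] k by (simp add: mult.commute)
  then have e1: "real (n choose i) * real i = real n * real ((n-1) choose (i-1))"
    by (metis of_nat_mult)
  have "(n choose i) * (n - i) = n * ((n-1) choose i)"
    using binomial_absorb_comp[of n i] by (simp add: mult.commute)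
  then have e2: "real (n choose i) * real (n - i) = real n * real ((n-1) choose i)"
    by (metis of_nat_mult)
  have "((\<lambda>p. real (n choose i) * p^i * (1-p)^(n-i)) has_real_derivative
     real (n choose i) * (real i * p^(i-1) * (1-p)^(n-i) - p^i * (real (n-i) * (1-p)^(n-i-1)))) (at p)"
    by (auto intro!: derivative_eq_intros simp: algebra_simps)
  moreover have "real (n choose i) * (real i * p^(i-1) * (1-p)^(n-i) - p^i * (real (n-i) * (1-p)^(n-i-1)))
      = bet i n p - bet (Suc i) n p"
  proof -
    have "real (n choose i) * (real i * p^(i-1) * (1-p)^(n-i) - p^i * (real (n-i) * (1-p)^(n-i-1)))
        = (real (n choose i) * real i) * p^(i-1) * (1-p)^(n-i) - (real (n choose i) * real (n-i)) * p^i * (1-p)^(n-i-1)"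
      by (simp add: algebra_simps)
    also have "\<dots> = bet i n p - bet (Suc i) n p"
      unfolding e1 e2 bet_def using assms by (simp add: Suc_diff_Suc)
    finally show ?thesis .
  qed
  ultimately show ?thesis by simp
qed

lemma Bin_deriv:
  assumes "1 \<le> i" "i \<le> n"
  shows "(Bin i n has_real_derivative bet i n p) (at p)"
proof -
  have "d < n \<Longrightarrow> (Bin (n - d) n has_real_derivative bet (n - d) n p) (at p)" for d
  proof (induction d)
    case 0
    have "((\<lambda>p. p ^ n) has_real_derivative real n * p ^ (n - 1)) (at p)"
      by (auto intro!: derivative_eq_intros)
    moreover have "Bin n n = (\<lambda>p. p ^ n)" by (simp add: fun_eq_iff Bin_top)
    ultimately show ?case by (simp add: bet_def)
  next
    case (Suc d)
    let ?i = "n - Suc d"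
    have i1: "1 \<le> ?i" "?i < n" using Suc.prems by auto
    have si: "Suc ?i = n - d" using Suc.prems by auto
    have "Bin ?i n = (\<lambda>p. real (n choose ?i) * p^?i * (1-p)^(n-?i) + Bin (n - d) n p)"
      using Bin_split[OF i1(2)] si by (auto simp: fun_eq_iff)
    moreover have "((\<lambda>p. real (n choose ?i) * p^?i * (1-p)^(n-?i) + Bin (n - d) n p) has_real_derivative
        (bet ?i n p - bet (Suc ?i) n p) + bet (n - d) n p) (at p)"
      using term_deriv[OF i1] Suc.IH Suc.prems by (intro DERIV_add) auto
    ultimately show ?case using si by simp
  qed
  from this[of "n - i"] assms show ?thesis by simp
qed

lemma Bin_0: "1 \<le> i \<Longrightarrow> Bin i n 0 = 0"
  unfolding Bin_def by (auto intro!: sum.neutral)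

lemma Bin_1: "i \<le> n \<Longrightarrow> Bin i n 1 = 1"
proof -
  assume "i \<le> n"
  then have "Bin i n 1 = (\<Sum>k\<in>{i..n}. if k = n then 1 else 0)"
    unfolding Bin_def by (intro sum.cong) auto
  also have "\<dots> = 1" using \<open>i \<le> n\<close> by (subst sum.delta) auto
  finally show ?thesis .
qed

lemma bet_nonneg: "0 \<le> u \<Longrightarrow> u \<le> 1 \<Longrightarrow> 0 \<le> bet i n u"
  unfolding bet_def by auto

lemma bet_cont: "continuous_on A (bet i n)"
  unfolding bet_def by (intro continuous_intros)

lemma Bin_cont: "continuous_on A (Bin i n)"
  unfolding Bin_def by (intro continuous_intros)

lemma Bin_mono: "1 \<le> i \<Longrightarrow> i \<le> n \<Longrightarrow> 0 \<le> x \<Longrightarrow> x \<le> y \<Longrightarrow> y \<le> 1 \<Longrightarrow> Bin i n x \<le> Bin i n y"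
  by (rule deriv_nonneg_imp_mono[where g="Bin i n" and g'="bet i n"]) (auto intro!: bet_nonneg Bin_deriv)

lemma bet_meas[measurable]: "bet i n \<in> borel_measurable borel"
  unfolding bet_def by measurable

abbreviation LL :: "real measure" where "LL \<equiv> restrict_space lborel {0<..<1::real}"

lemma nn_integral_bet:
  assumes "1 \<le> i" "i \<le> n" "0 \<le> c" "c \<le> 1"
  shows "(\<integral>\<^sup>+u. ennreal (bet i n u) * indicator {u. 0 < u \<and> u < 1 \<and> u \<le> c} u \<partial>lborel) = ennreal (Bin i n c)"
proof -
  have "(\<integral>\<^sup>+u. ennreal (bet i n u) * indicator {u. 0 < u \<and> u < 1 \<and> u \<le> c} u \<partial>lborel)
      = (\<integral>\<^sup>+u. ennreal (bet i n u) * indicator {0..c} u \<partial>lborel)"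
  proof (rule nn_integral_cong_AE)
    show "AE x in lborel. ennreal (bet i n x) * indicator {u. 0 < u \<and> u < 1 \<and> u \<le> c} x =
        ennreal (bet i n x) * indicator {0..c} x"
      using AE_lborel_singleton[of 0] AE_lborel_singleton[of 1]
      by eventually_elim (use assms in \<open>auto simp: indicator_def\<close>)
  qed
  also have "\<dots> = ennreal (Bin i n c - Bin i n 0)"
    using assms by (intro nn_integral_FTC_Icc)
      (auto intro!: Bin_deriv bet_nonneg)
  finally show ?thesis using assms by (simp add: Bin_0)
qed

lemma density_quantile_cdf:
  fixes M :: "real measure"
  assumes M: "real_distribution M" and i: "1 \<le> i" "i \<le> n"
  defines "V \<equiv> density LL (\<lambda>u. ennreal (bet i n u))"
  shows "real_distribution (distr V borel (quantile (cdf M)))"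
    and "cdf (distr V borel (quantile (cdf M))) t = Bin i n (cdf M t)"
    and "quantile (cdf M) \<in> borel_measurable V"
    and "prob_space V"
proof -
  interpret cdf_distribution M using M by (simp add: cdf_distribution_def)
  have QI: "quantile (cdf M) = (\<lambda>\<omega>. Inf {x. \<omega> \<le> cdf M x})" by (simp add: fun_eq_iff quantile_def)
  have sV: "sets V = sets (restrict_space borel {0<..<1::real})"
    unfolding V_def by (simp add: sets_restrict_space_cong[OF sets_lborel])
  have spV: "space V = {0<..<1}" unfolding V_def by (simp add: space_restrict_space)
  show meas: "quantile (cdf M) \<in> borel_measurable V"
    unfolding QI using measurable_CI by (simp add: measurable_cong_sets[OF sV refl])
  have emV: "emeasure V A = ennreal (Bin i n c)" if "A = {u. 0 < u \<and> u < 1 \<and> u \<le> c}" "0 \<le> c" "c \<le> 1" for A c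
  proof -
    have "A \<in> sets LL" using that by (auto simp: sets_restrict_space_iff)
    then have "emeasure V A = (\<integral>\<^sup>+u. ennreal (bet i n u) * indicator A u \<partial>LL)"
      unfolding V_def by (subst emeasure_density) (auto intro!: measurable_restrict_space1)
    also have "\<dots> = (\<integral>\<^sup>+u. ennreal (bet i n u) * indicator {u. 0 < u \<and> u < 1 \<and> u \<le> c} u \<partial>lborel)"
      using that by (subst nn_integral_restrict_space) (auto intro!: nn_integral_cong simp: indicator_def)
    also have "\<dots> = ennreal (Bin i n c)" using nn_integral_bet i that by simp
    finally show ?thesis .
  qed
  have "emeasure V (space V) = 1"
  proof -
    have "space V = {u. 0 < u \<and> u < 1 \<and> u \<le> 1}" using spV by auto
    then show ?thesis using emV[of "space V" 1] i by (simp add: Bin_1)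
  qed
  then show pV: "prob_space V" by (rule prob_spaceI)
  interpret V: prob_space V by fact
  show "real_distribution (distr V borel (quantile (cdf M)))"
  proof (rule real_distribution.intro)
    show "prob_space (distr V borel (quantile (cdf M)))" by (rule V.prob_space_distr[OF meas])
    show "real_distribution_axioms (distr V borel (quantile (cdf M)))"
      by (simp add: real_distribution_axioms_def)
  qed
  have "cdf (distr V borel (quantile (cdf M))) t = measure V {u \<in> space V. quantile (cdf M) u \<le> t}"
    unfolding cdf_def[of "distr V borel (quantile (cdf M))"] using meas
    by (subst measure_distr) (auto intro!: arg_cong2[where f=measure])
  also have "{u \<in> space V. quantile (cdf M) u \<le> t} = {u. 0 < u \<and> u < 1 \<and> u \<le> cdf M t}"
    unfolding spV QI using pseudoinverse by auto
  also have "measure V \<dots> = Bin i n (cdf M t)"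
    using emV[OF refl, of "cdf M t"] i
    by (simp add: measure_def cdf_nonneg cdf_bounded_prob Bin_mono[of i n 0 "cdf M t", simplified Bin_0])
  finally show "cdf (distr V borel (quantile (cdf M))) t = Bin i n (cdf M t)" .
qed

lemma reduction:
  fixes M :: "real measure"
  assumes M: "real_distribution M" and intM: "integrable M (\<lambda>x. x)" and i: "1 \<le> i" "i \<le> n"
  shows "(\<integral>x. order_stat i n x \<partial>(PiM {..<n} (\<lambda>_. M))) = (\<integral>u. bet i n u * quantile (cdf M) u \<partial>LL)"
    and "(\<integral>x. x \<partial>M) = (\<integral>u. quantile (cdf M) u \<partial>LL)"
    and "integrable LL (quantile (cdf M))"
proof -
  interpret cdf_distribution M using M by (simp add: cdf_distribution_def)
  interpret P: product_prob_space "\<lambda>_. M" "{..<n}" by unfold_locales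
  let ?P = "PiM {..<n} (\<lambda>_. M)"
  let ?Q = "quantile (cdf M)"
  define V where "V = density LL (\<lambda>u. ennreal (bet i n u))"
  note D = density_quantile_cdf[OF M i, folded V_def]
  have QI: "?Q = (\<lambda>\<omega>. Inf {x. \<omega> \<le> cdf M x})" by (simp add: fun_eq_iff quantile_def)
  have osm[measurable]: "order_stat i n \<in> borel_measurable ?P"
    using order_stat_measurable[of M i n] i by simp
  have rdP: "real_distribution (distr ?P borel (order_stat i n))"
  proof (rule real_distribution.intro)
    show "prob_space (distr ?P borel (order_stat i n))" by (rule P.prob_space_distr[OF osm])
    show "real_distribution_axioms (distr ?P borel (order_stat i n))"
      by (simp add: real_distribution_axioms_def)
  qed
  have eqd: "distr ?P borel (order_stat i n) = distr V borel ?Q"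
    by (rule cdf_unique[OF rdP D(1)]) (simp add: fun_eq_iff cdf_order_stat[OF M i] D(2))
  have QmLL: "?Q \<in> borel_measurable LL"
    unfolding QI using measurable_CI
    by (simp add: measurable_cong_sets[OF sets_restrict_space_cong[OF sets_lborel] refl])
  have "(\<integral>x. order_stat i n x \<partial>?P) = (\<integral>x. x \<partial>(distr ?P borel (order_stat i n)))"
    by (subst integral_distr) auto
  also have "\<dots> = (\<integral>x. x \<partial>(distr V borel ?Q))" by (simp add: eqd)
  also have "\<dots> = (\<integral>u. ?Q u \<partial>V)" using D(3) by (subst integral_distr) auto
  also have "\<dots> = (\<integral>u. bet i n u * ?Q u \<partial>LL)"
    unfolding V_def
    by (subst integral_density) (auto intro!: measurable_restrict_space1 QmLL AE_I2 bet_nonneg simp: space_restrict_space)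
  finally show "(\<integral>x. order_stat i n x \<partial>?P) = (\<integral>u. bet i n u * ?Q u \<partial>LL)" .
  have MQ: "M = distr LL borel ?Q"
    unfolding QI by (rule distr_I_eq_M[symmetric])
  have "(\<integral>x. x \<partial>M) = (\<integral>x. x \<partial>(distr LL borel ?Q))" using MQ by simp
  also have "\<dots> = (\<integral>u. ?Q u \<partial>LL)" using QmLL by (subst integral_distr) auto
  finally show "(\<integral>x. x \<partial>M) = (\<integral>u. ?Q u \<partial>LL)" .
  have "integrable (distr LL borel ?Q) (\<lambda>x. x)" using intM MQ by simp
  then show "integrable LL ?Q" using QmLL by (subst (asm) integrable_distr_eq) auto
qed

lemma einterval01: "einterval 0 1 = {0<..<1::real}"
  by (auto simp: einterval_def zero_ereal_def one_ereal_def)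

lemma LL_integral: fixes f :: "real \<Rightarrow> real" shows "integral\<^sup>L LL f = (LBINT x=0..1. f x)"
  by (simp add: integral_restrict_space interval_lebesgue_integral_def set_lebesgue_integral_def einterval01)

lemma LL_integrable: fixes f :: "real \<Rightarrow> real" shows "integrable LL f \<longleftrightarrow> set_integrable lborel {0<..<1} f"
  using set_integrable_eq[of "{0<..<1::real}" lborel f] by simp

lemma LL_space: "space LL = {0<..<1}"
  by (simp add: space_restrict_space)

lemma LL_measure: "measure LL (space LL) = 1"
  unfolding LL_space by (subst measure_restrict_space) (auto simp: measure_lborel_Ioo)

lemma LL_const: "integral\<^sup>L LL (\<lambda>_. c) = (c::real)"
  using LL_measure by (subst lebesgue_integral_const) simp

lemma isCont_at_right:
  fixes f :: "real \<Rightarrow> real"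
  shows "isCont f x \<Longrightarrow> (f \<longlongrightarrow> f x) (at_right x)"
  by (rule tendsto_within_subset[of _ _ _ UNIV]) (simp_all add: isCont_def)

lemma isCont_at_left:
  fixes f :: "real \<Rightarrow> real"
  shows "isCont f x \<Longrightarrow> (f \<longlongrightarrow> f x) (at_left x)"
  by (rule tendsto_within_subset[of _ _ _ UNIV]) (simp_all add: isCont_def)

lemma LL_int_const: "integrable LL (\<lambda>_. c::real)"
  by (simp add: LL_integrable set_integrable_def)

lemma FTC01:
  fixes f F :: "real \<Rightarrow> real"
  assumes F: "\<And>x. 0 < x \<Longrightarrow> x < 1 \<Longrightarrow> (F has_real_derivative f x) (at x)"
    and f: "\<And>x. 0 < x \<Longrightarrow> x < 1 \<Longrightarrow> isCont f x"
    and nn: "\<And>x. 0 < x \<Longrightarrow> x < 1 \<Longrightarrow> 0 \<le> f x"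
    and A: "(F \<longlongrightarrow> A) (at_right 0)"
    and B: "(F \<longlongrightarrow> B) (at_left 1)"
  shows "integrable LL f" "integral\<^sup>L LL f = B - A"
proof -
  have a: "(0::ereal) < 1" by simp
  have AE: "AE x in lborel. 0 < ereal x \<longrightarrow> ereal x < 1 \<longrightarrow> 0 \<le> f x"
    using nn by (auto simp: zero_ereal_def one_ereal_def)
  have A': "((F \<circ> real_of_ereal) \<longlongrightarrow> A) (at_right 0)"
    using A by (simp add: zero_ereal_def ereal_tendsto_simps1)
  have B': "((F \<circ> real_of_ereal) \<longlongrightarrow> B) (at_left 1)"
    using B by (simp add: one_ereal_def ereal_tendsto_simps1)
  note R = interval_integral_FTC_nonneg[OF a _ _ AE A' B']
  have F': "\<And>x. 0 < ereal x \<Longrightarrow> ereal x < 1 \<Longrightarrow> (F has_real_derivative f x) (at x)"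
    using F by (auto simp: zero_ereal_def one_ereal_def)
  have f': "\<And>x. 0 < ereal x \<Longrightarrow> ereal x < 1 \<Longrightarrow> isCont f x"
    using f by (auto simp: zero_ereal_def one_ereal_def)
  have e: "einterval 0 1 = {0<..<1::real}"
    by (auto simp: einterval_def zero_ereal_def one_ereal_def)
  show "integrable LL f" using R(1)[OF F' f'] by (simp add: LL_integrable e)
  show "integral\<^sup>L LL f = B - A" using R(2)[OF F' f'] by (simp add: LL_integral zero_ereal_def one_ereal_def)
qed

lemma bet_int:
  assumes "1 \<le> i" "i \<le> n"
  shows "integrable LL (bet i n)" "integral\<^sup>L LL (bet i n) = 1"
proof -
  have "isCont (bet i n) x" for x using bet_cont[of UNIV i n] by (simp add: continuous_on_eq_continuous_at)
  moreover have "isCont (Bin i n) x" for x using Bin_cont[of UNIV i n] by (simp add: continuous_on_eq_continuous_at)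
  ultimately have A: "(Bin i n \<longlongrightarrow> 0) (at_right 0)" and B: "(Bin i n \<longlongrightarrow> 1) (at_left 1)"
    using assms isCont_at_right[where f="Bin i n" and x=0] isCont_at_left[where f="Bin i n" and x=1] by (auto simp: Bin_0 Bin_1)
  note R = FTC01[OF Bin_deriv[OF assms] _ _ A B]
  show "integrable LL (bet i n)" "integral\<^sup>L LL (bet i n) = 1"
    using R \<open>\<And>x. isCont (bet i n) x\<close> bet_nonneg by auto
qed

lemma bet_bound: "0 \<le> u \<Longrightarrow> u \<le> 1 \<Longrightarrow> bet i n u \<le> real n * real ((n-1) choose (i-1))"
proof -
  assume u: "0 \<le> u" "u \<le> 1"
  have "u^(i-1) * (1-u)^(n-i) \<le> 1" using u by (intro mult_le_one power_le_one) auto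
  then have "(real n * real ((n-1) choose (i-1))) * (u^(i-1) * (1-u)^(n-i)) \<le> (real n * real ((n-1) choose (i-1))) * 1"
    by (intro mult_left_mono) auto
  then show ?thesis unfolding bet_def by (simp add: mult.assoc)
qed

lemma int_betQ:
  assumes "integrable LL Q"
  shows "integrable LL (\<lambda>u. bet i n u * Q u)"
proof (rule Bochner_Integration.integrable_bound)
  show "integrable LL (\<lambda>u. (real n * real ((n-1) choose (i-1))) * Q u)"
    using assms by simp
  show "(\<lambda>u. bet i n u * Q u) \<in> borel_measurable LL"
    using borel_measurable_integrable[OF assms]
    by (intro borel_measurable_times) (auto intro!: measurable_restrict_space1)
  show "AE x in LL. norm (bet i n x * Q x) \<le> norm (real n * real ((n-1) choose (i-1)) * Q x)"
  proof (intro AE_I2)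
    fix x assume "x \<in> space LL"
    then have x: "0 \<le> x" "x \<le> 1" by (auto simp: LL_space)
    have "\<bar>bet i n x\<bar> * \<bar>Q x\<bar> \<le> \<bar>real n * real ((n-1) choose (i-1))\<bar> * \<bar>Q x\<bar>"
      using bet_bound[OF x, of i n] bet_nonneg[OF x, of i n] by (intro mult_right_mono) auto
    then show "norm (bet i n x * Q x) \<le> norm (real n * real ((n-1) choose (i-1)) * Q x)"
      by (simp add: abs_mult)
  qed
qed

lemma binom_sum_one: "(\<Sum>k\<le>n. real (n choose k) * u^k * (1-u)^(n-k)) = 1"
  using binomial_ring[of u "1-u" n] by simp

lemma one_minus_Bin:
  assumes "i \<le> n"
  shows "1 - Bin i n u = (\<Sum>k<i. real (n choose k) * u^k * (1-u)^(n-k))"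
proof -
  have "{..n} = {..<i} \<union> {i..n}" using assms by auto
  then have "(\<Sum>k\<le>n. real (n choose k) * u^k * (1-u)^(n-k)) =
      (\<Sum>k<i. real (n choose k) * u^k * (1-u)^(n-k)) + Bin i n u"
    unfolding Bin_def by (subst sum.union_disjoint[symmetric]) auto
  then show ?thesis using binom_sum_one[of n u] by simp
qed

lemma bet_Suc_ident:
  assumes "k < n"
  shows "bet (Suc k) n u / real (n - k) * (1 - u) = real (n choose k) * u^k * (1-u)^(n-k)"
proof -
  have "(n choose k) * (n - k) = n * ((n-1) choose k)"
    using binomial_absorb_comp[of n k] by (simp add: mult.commute)
  then have e: "real n * real ((n-1) choose k) = real (n choose k) * real (n - k)"
    by (metis of_nat_mult)
  have p: "(1-u)^(n-k) = (1-u)^(n - Suc k) * (1-u)" using assms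
    by (metis Suc_diff_Suc power_Suc2)
  have "bet (Suc k) n u / real (n - k) * (1 - u) = (real n * real ((n-1) choose k)) / real (n-k) * u^k * ((1-u)^(n - Suc k) * (1-u))"
    unfolding bet_def by simp
  also have "\<dots> = real (n choose k) * u^k * (1-u)^(n-k)"
    unfolding e p using assms by simp
  finally show ?thesis .
qed

lemma bet_ident:
  assumes "1 \<le> k"
  shows "bet k n u / real k * u = real (n choose k) * u^k * (1-u)^(n-k)"
proof -
  obtain j where j: "k = Suc j" using assms by (cases k) auto
  have "(n choose k) * k = n * ((n-1) choose (k-1))"
    using binomial_absorption[of j n] j by (simp add: mult.commute)
  then have e: "real n * real ((n-1) choose (k-1)) = real (n choose k) * real k"
    by (metis of_nat_mult)
  have p: "u^k = u^(k-1) * u" using j by simp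
  have "bet k n u / real k * u = (real n * real ((n-1) choose (k-1))) / real k * (u^(k-1) * u) * (1-u)^(n-k)"
    unfolding bet_def by simp
  also have "\<dots> = real (n choose k) * u^k * (1-u)^(n-k)"
    unfolding e p using assms by simp
  finally show ?thesis .
qed

lemma harm_sum1:
  assumes "i \<le> n"
  shows "(\<Sum>k<i. 1 / real (n - k)) = harm n - harm (n - i)"
  using assms
proof (induction i)
  case 0 then show ?case by simp
next
  case (Suc i)
  have "n - i = Suc (n - Suc i)" using Suc.prems by auto
  then have "harm (n - i) = harm (n - Suc i) + 1 / real (n - i)"
    by (simp add: harm_Suc inverse_eq_divide)
  then show ?case using Suc by simp
qed

lemma harm_sum2:
  assumes "1 \<le> i" "i \<le> Suc n"
  shows "(\<Sum>k=i..n. 1 / real k) = harm n - harm (i - 1)"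
  using assms
proof (induction n)
  case 0 then show ?case by (cases i) (auto simp: harm_def)
next
  case (Suc n)
  show ?case
  proof (cases "i = Suc (Suc n)")
    case True then show ?thesis by simp
  next
    case False
    then have "i \<le> Suc n" using Suc.prems by auto
    then have "(\<Sum>k=i..Suc n. 1 / real k) = (\<Sum>k=i..n. 1 / real k) + 1 / real (Suc n)"
      by (simp add: sum.cl_ivl_Suc)
    then show ?thesis using Suc.IH[OF Suc.prems(1) \<open>i \<le> Suc n\<close>]
      by (simp add: harm_Suc inverse_eq_divide)
  qed
qed

lemma lim_log1: "((\<lambda>u::real. (1-u) * ln (1-u)) \<longlongrightarrow> 0) (at_left 1)"
  by real_asymp

lemma lim_log0: "((\<lambda>u::real. u * ln u) \<longlongrightarrow> 0) (at_right 0)"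
  by real_asymp

lemma int_log1:
  assumes i: "1 \<le> i" "i \<le> n"
  shows "integrable LL (\<lambda>u. - ln (1-u) * bet i n u)"
    "integral\<^sup>L LL (\<lambda>u. - ln (1-u) * bet i n u) = harm n - harm (n-i)"
proof -
  define F where "F u = - ln (1-u) * (Bin i n u - 1) + (\<Sum>k<i. Bin (Suc k) n u / real (n-k))" for u
  have D: "(F has_real_derivative - ln (1-u) * bet i n u) (at u)" if u: "0 < u" "u < 1" for u
  proof -
    have d1: "((\<lambda>u. - ln (1-u)) has_real_derivative 1 / (1-u)) (at u)"
      using u by (auto intro!: derivative_eq_intros simp: field_simps)
    have d2: "((\<lambda>u. \<Sum>k<i. Bin (Suc k) n u / real (n-k)) has_real_derivative (\<Sum>k<i. bet (Suc k) n u / real (n-k))) (at u)"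
      using i by (intro DERIV_sum DERIV_cdivide Bin_deriv) auto
    have d3: "((\<lambda>u. - ln (1-u) * (Bin i n u - 1)) has_real_derivative (- ln (1-u) * (bet i n u - 0) + 1 / (1-u) * (Bin i n u - 1))) (at u)"
      by (rule DERIV_mult'[OF d1 DERIV_diff[OF Bin_deriv[OF i] DERIV_const]])
    have "(F has_real_derivative (- ln (1-u) * (bet i n u - 0) + 1 / (1-u) * (Bin i n u - 1)) + (\<Sum>k<i. bet (Suc k) n u / real (n-k))) (at u)"
      unfolding F_def[abs_def] by (rule DERIV_add[OF d3 d2])
    moreover have "(\<Sum>k<i. bet (Suc k) n u / real (n-k)) = (1 - Bin i n u) / (1-u)"
    proof -
      have "(\<Sum>k<i. bet (Suc k) n u / real (n-k)) * (1-u) = (\<Sum>k<i. bet (Suc k) n u / real (n-k) * (1-u))"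
        by (simp add: sum_distrib_right)
      also have "\<dots> = (\<Sum>k<i. real (n choose k) * u^k * (1-u)^(n-k))"
        using i by (intro sum.cong bet_Suc_ident) auto
      also have "\<dots> = 1 - Bin i n u" using one_minus_Bin[OF i(2)] by simp
      finally show ?thesis using u by (simp add: field_simps)
    qed
    ultimately show ?thesis
    proof (elim DERIV_cong)
      assume E: "(\<Sum>k<i. bet (Suc k) n u / real (n-k)) = (1 - Bin i n u) / (1-u)"
      have "1 / (1-u) * (Bin i n u - 1) + (1 - Bin i n u) / (1-u) = 0"
        using u by (simp add: field_simps)
      then show "- ln (1-u) * (bet i n u - 0) + 1 / (1-u) * (Bin i n u - 1) + (\<Sum>k<i. bet (Suc k) n u / real (n-k)) = - ln (1-u) * bet i n u"
        unfolding E by simp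
    qed
  qed
  have C: "isCont (\<lambda>u. - ln (1-u) * bet i n u) u" if u: "0 < u" "u < 1" for u
    using u bet_cont[of UNIV i n] by (auto intro!: continuous_intros simp: continuous_on_eq_continuous_at)
  have N: "0 \<le> - ln (1-u) * bet i n u" if u: "0 < u" "u < 1" for u
    using u bet_nonneg[of u i n] by (intro mult_nonneg_nonneg) auto
  have contS: "isCont (\<lambda>u. \<Sum>k<i. Bin (Suc k) n u / real (n-k)) x" for x
    using Bin_cont[of UNIV] by (intro continuous_intros) (use i in \<open>auto simp: continuous_on_eq_continuous_at\<close>)
  have A: "(F \<longlongrightarrow> 0) (at_right 0)"
  proof -
    have "isCont F 0"
      unfolding F_def[abs_def] using Bin_cont[of UNIV]
      by (intro continuous_intros contS) (auto simp: continuous_on_eq_continuous_at)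
    moreover have "F 0 = 0" unfolding F_def by (simp add: Bin_0)
    ultimately show ?thesis using isCont_at_right[where f=F and x=0] by simp
  qed
  have B: "(F \<longlongrightarrow> harm n - harm (n-i)) (at_left 1)"
  proof -
    have "((\<lambda>u. \<Sum>k<i. Bin (Suc k) n u / real (n-k)) \<longlongrightarrow> (\<Sum>k<i. Bin (Suc k) n 1 / real (n-k))) (at_left 1)"
      by (rule isCont_at_left[OF contS])
    also have "(\<Sum>k<i. Bin (Suc k) n 1 / real (n-k)) = (\<Sum>k<i. 1 / real (n-k))"
      using i by (intro sum.cong) (auto simp: Bin_1)
    also have "\<dots> = harm n - harm (n-i)" using harm_sum1[OF i(2)] .
    finally have S: "((\<lambda>u. \<Sum>k<i. Bin (Suc k) n u / real (n-k)) \<longlongrightarrow> harm n - harm (n-i)) (at_left 1)" .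
    define K where "K = (\<Sum>k<i. real (n choose k))"
    have Z: "((\<lambda>u. - ln (1-u) * (Bin i n u - 1)) \<longlongrightarrow> 0) (at_left 1)"
    proof (rule Lim_null_comparison)
      show "((\<lambda>u. K * (- ((1-u) * ln (1-u)))) \<longlongrightarrow> 0) (at_left 1)"
        using tendsto_mult[OF tendsto_const[of K] tendsto_minus[OF lim_log1]] by simp
      have "eventually (\<lambda>u. u \<in> {0<..<(1::real)}) (at_left 1)"
        by (rule eventually_at_left_real) simp
      then have "eventually (\<lambda>u. 0 < u \<and> u < (1::real)) (at_left 1)" by simp
      then show "eventually (\<lambda>u. norm (- ln (1-u) * (Bin i n u - 1)) \<le> K * (- ((1-u) * ln (1-u)))) (at_left 1)"
      proof eventually_elim
        case (elim u)
        have b: "1 - Bin i n u \<le> K * (1-u)"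
        proof -
          have "1 - Bin i n u = (\<Sum>k<i. real (n choose k) * u^k * (1-u)^(n-k))" using one_minus_Bin[OF i(2)] .
          also have "\<dots> \<le> (\<Sum>k<i. real (n choose k) * (1-u))"
          proof (rule sum_mono)
            fix k assume "k \<in> {..<i}"
            then have "1 \<le> n - k" using i by auto
            have "u^k * (1-u)^(n-k) \<le> 1 * (1-u)"
            proof (rule mult_mono)
              show "u^k \<le> 1" using elim by (auto intro: power_le_one)
              show "(1-u)^(n-k) \<le> 1-u" using elim \<open>1 \<le> n - k\<close> by (intro power_decreasing[where n=1, simplified]) auto
            qed (use elim in auto)
            then show "real (n choose k) * u^k * (1-u)^(n-k) \<le> real (n choose k) * (1-u)"
              by (simp add: mult.assoc mult_left_mono)
          qed
          also have "\<dots> = K * (1-u)" unfolding K_def by (simp add: sum_distrib_right)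
          finally show ?thesis .
        qed
        have b0: "0 \<le> 1 - Bin i n u" using one_minus_Bin[OF i(2), of u] elim
          by (auto intro!: sum_nonneg)
        have l: "0 \<le> - ln (1-u)" using elim by auto
        have "norm (- ln (1-u) * (Bin i n u - 1)) = (- ln (1-u)) * (1 - Bin i n u)"
          using b0 l by (simp add: abs_mult)
        also have "\<dots> \<le> (- ln (1-u)) * (K * (1-u))" using b l by (intro mult_left_mono) auto
        finally show ?case by (simp add: algebra_simps)
      qed
    qed
    show ?thesis unfolding F_def[abs_def] using tendsto_add[OF Z S] by simp
  qed
  note R = FTC01[OF D C N A B]
  show "integrable LL (\<lambda>u. - ln (1-u) * bet i n u)" using R(1) .
  show "integral\<^sup>L LL (\<lambda>u. - ln (1-u) * bet i n u) = harm n - harm (n-i)" using R(2) by simp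
qed

lemma int_log0:
  assumes i: "1 \<le> i" "i \<le> n"
  shows "integrable LL (\<lambda>u. - ln u * bet i n u)"
    "integral\<^sup>L LL (\<lambda>u. - ln u * bet i n u) = harm n - harm (i-1)"
proof -
  define F where "F u = - ln u * Bin i n u + (\<Sum>k=i..n. Bin k n u / real k)" for u
  have D: "(F has_real_derivative - ln u * bet i n u) (at u)" if u: "0 < u" "u < 1" for u
  proof -
    have d1: "((\<lambda>u. - ln u) has_real_derivative - (1 / u)) (at u)"
      using u by (auto intro!: derivative_eq_intros simp: field_simps)
    have d2: "((\<lambda>u. \<Sum>k=i..n. Bin k n u / real k) has_real_derivative (\<Sum>k=i..n. bet k n u / real k)) (at u)"
      using i by (intro DERIV_sum DERIV_cdivide Bin_deriv) auto
    have d3: "((\<lambda>u. - ln u * Bin i n u) has_real_derivative (- ln u * bet i n u + - (1 / u) * Bin i n u)) (at u)"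
      by (rule DERIV_mult'[OF d1 Bin_deriv[OF i]])
    have "(F has_real_derivative (- ln u * bet i n u + - (1 / u) * Bin i n u) + (\<Sum>k=i..n. bet k n u / real k)) (at u)"
      unfolding F_def[abs_def] by (rule DERIV_add[OF d3 d2])
    moreover have "(\<Sum>k=i..n. bet k n u / real k) = Bin i n u / u"
    proof -
      have "(\<Sum>k=i..n. bet k n u / real k) * u = (\<Sum>k=i..n. bet k n u / real k * u)"
        by (simp add: sum_distrib_right)
      also have "\<dots> = Bin i n u"
        unfolding Bin_def using i by (intro sum.cong bet_ident) auto
      finally show ?thesis using u by (simp add: field_simps)
    qed
    ultimately show ?thesis
    proof (elim DERIV_cong)
      assume E: "(\<Sum>k=i..n. bet k n u / real k) = Bin i n u / u"
      have "- (1 / u) * Bin i n u + Bin i n u / u = 0"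
        using u by (simp add: field_simps)
      then show "- ln u * bet i n u + - (1 / u) * Bin i n u + (\<Sum>k=i..n. bet k n u / real k) = - ln u * bet i n u"
        unfolding E by simp
    qed
  qed
  have C: "isCont (\<lambda>u. - ln u * bet i n u) u" if u: "0 < u" "u < 1" for u
    using u bet_cont[of UNIV i n] by (auto intro!: continuous_intros simp: continuous_on_eq_continuous_at)
  have N: "0 \<le> - ln u * bet i n u" if u: "0 < u" "u < 1" for u
    using u bet_nonneg[of u i n] by (intro mult_nonneg_nonneg) auto
  have contS: "isCont (\<lambda>u. \<Sum>k=i..n. Bin k n u / real k) x" for x
    using Bin_cont[of UNIV] by (intro continuous_intros) (use i in \<open>auto simp: continuous_on_eq_continuous_at\<close>)
  have B: "(F \<longlongrightarrow> harm n - harm (i-1)) (at_left 1)"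
  proof -
    have "isCont F 1"
      unfolding F_def[abs_def] using Bin_cont[of UNIV]
      by (intro continuous_intros contS) (auto simp: continuous_on_eq_continuous_at)
    moreover have "F 1 = harm n - harm (i-1)"
    proof -
      have "F 1 = (\<Sum>k=i..n. 1 / real k)" unfolding F_def using i by (auto intro!: sum.cong simp: Bin_1)
      then show ?thesis using harm_sum2[of i n] i by simp
    qed
    ultimately show ?thesis using isCont_at_left[where f=F and x=1] by simp
  qed
  have A: "(F \<longlongrightarrow> 0) (at_right 0)"
  proof -
    have "((\<lambda>u. \<Sum>k=i..n. Bin k n u / real k) \<longlongrightarrow> (\<Sum>k=i..n. Bin k n 0 / real k)) (at_right 0)"
      by (rule isCont_at_right[OF contS])
    also have "(\<Sum>k=i..n. Bin k n 0 / real k) = 0"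
      using i by (intro sum.neutral) (auto simp: Bin_0)
    finally have S: "((\<lambda>u. \<Sum>k=i..n. Bin k n u / real k) \<longlongrightarrow> 0) (at_right 0)" .
    define K where "K = (\<Sum>k=i..n. real (n choose k))"
    have Z: "((\<lambda>u. - ln u * Bin i n u) \<longlongrightarrow> 0) (at_right 0)"
    proof (rule Lim_null_comparison)
      show "((\<lambda>u. K * (- (u * ln u))) \<longlongrightarrow> 0) (at_right 0)"
        using tendsto_mult[OF tendsto_const[of K] tendsto_minus[OF lim_log0]] by simp
      have "eventually (\<lambda>u. u \<in> {0<..<(1::real)}) (at_right 0)"
        by (rule eventually_at_right_real) simp
      then have "eventually (\<lambda>u. 0 < u \<and> u < (1::real)) (at_right 0)" by simp
      then show "eventually (\<lambda>u. norm (- ln u * Bin i n u) \<le> K * (- (u * ln u))) (at_right 0)"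
      proof eventually_elim
        case (elim u)
        have b: "Bin i n u \<le> K * u"
        proof -
          have "Bin i n u \<le> (\<Sum>k=i..n. real (n choose k) * u)"
            unfolding Bin_def
          proof (rule sum_mono)
            fix k assume "k \<in> {i..n}"
            then have "1 \<le> k" using i by auto
            have "u^k * (1-u)^(n-k) \<le> u * 1"
            proof (rule mult_mono)
              show "(1-u)^(n-k) \<le> 1" using elim by (auto intro: power_le_one)
              show "u^k \<le> u" using elim \<open>1 \<le> k\<close> by (intro power_decreasing[where n=1, simplified]) auto
            qed (use elim in auto)
            then show "real (n choose k) * u^k * (1-u)^(n-k) \<le> real (n choose k) * u"
              by (simp add: mult.assoc mult_left_mono)
          qed
          also have "\<dots> = K * u" unfolding K_def by (simp add: sum_distrib_right)
          finally show ?thesis .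
        qed
        have b0: "0 \<le> Bin i n u" unfolding Bin_def using elim by (auto intro!: sum_nonneg)
        have l: "0 \<le> - ln u" using elim by auto
        have "norm (- ln u * Bin i n u) = (- ln u) * Bin i n u"
          using b0 l by (simp add: abs_mult)
        also have "\<dots> \<le> (- ln u) * (K * u)" using b l by (intro mult_left_mono) auto
        finally show ?case by (simp add: algebra_simps)
      qed
    qed
    show ?thesis unfolding F_def[abs_def] using tendsto_add[OF Z S] by simp
  qed
  note R = FTC01[OF D C N A B]
  show "integrable LL (\<lambda>u. - ln u * bet i n u)" using R(1) .
  show "integral\<^sup>L LL (\<lambda>u. - ln u * bet i n u) = harm n - harm (i-1)" using R(2) by simp
qed

lemma int_id:
  assumes i: "1 \<le> i" "i \<le> n"
  shows "integrable LL (\<lambda>u. u * bet i n u)" "integral\<^sup>L LL (\<lambda>u. u * bet i n u) = real i / (real n + 1)"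
proof -
  have e: "u * bet i n u = real i / (real n + 1) * bet (Suc i) (Suc n) u" for u
  proof -
    obtain k where k: "i = Suc k" using i by (cases i) auto
    have "(n choose i) * i = n * ((n-1) choose (i-1))"
      using binomial_absorption[of k n] k by (simp add: mult.commute)
    then have e1: "real n * real ((n-1) choose (i-1)) = real (n choose i) * real i"
      by (metis of_nat_mult)
    have "u * bet i n u = (real n * real ((n-1) choose (i-1))) * (u^(i-1) * u) * (1-u)^(n-i)"
      unfolding bet_def by (simp add: algebra_simps)
    also have "\<dots> = real (n choose i) * real i * u^i * (1-u)^(n-i)"
      unfolding e1 using k by simp
    also have "\<dots> = real i / (real n + 1) * bet (Suc i) (Suc n) u"
      unfolding bet_def by (simp add: field_simps)
    finally show ?thesis .
  qed
  have "1 \<le> Suc i" "Suc i \<le> Suc n" using i by auto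
  note R = bet_int[OF this]
  show "integrable LL (\<lambda>u. u * bet i n u)" unfolding e using R(1) by simp
  show "integral\<^sup>L LL (\<lambda>u. u * bet i n u) = real i / (real n + 1)" unfolding e using R(2) by simp
qed

lemma concave3:
  fixes g :: "real \<Rightarrow> real"
  assumes "concave_on D g" "x \<in> D" "z \<in> D" "x < y" "y < z"
  shows "g x * (z - y) + g z * (y - x) \<le> g y * (z - x)"
proof -
  define t where "t = (y - x) / (z - x)"
  have t: "0 \<le> t" "t \<le> 1" using assms by (auto simp: t_def field_simps)
  have tz: "t * (z - x) = y - x" using assms by (simp add: t_def)
  have y: "(1 - t) *\<^sub>R x + t *\<^sub>R z = y"
  proof -
    have "(1 - t) *\<^sub>R x + t *\<^sub>R z = x + t * (z - x)" by (simp add: algebra_simps)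
    then show ?thesis using tz by simp
  qed
  have "(1 - t) * g x + t * g z \<le> g y"
    using concave_onD[OF assms(1) t assms(2,3)] y by simp
  then have "((1 - t) * g x + t * g z) * (z - x) \<le> g y * (z - x)"
    using assms by (intro mult_right_mono) auto
  moreover have "((1 - t) * g x + t * g z) * (z - x) = g x * (z - y) + g z * (y - x)"
  proof -
    have "((1 - t) * g x + t * g z) * (z - x) = g x * ((z - x) - t * (z - x)) + g z * (t * (z - x))"
      by (simp add: algebra_simps)
    then show ?thesis using tz by simp
  qed
  ultimately show ?thesis by simp
qed

lemma bet_qc:
  assumes i: "1 \<le> i" "i \<le> n" and uvx: "0 < u" "u < v" "v < x" "x < 1"
    and bu: "1 < bet i n u" and bx: "1 < bet i n x"
  shows "1 < bet i n v"
proof -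
  define c where "c = real n * real ((n-1) choose (i-1))"
  have c: "0 < c" unfolding c_def using i by auto
  define h where "h y = ln c + real (i-1) * ln y + real (n-i) * ln (1-y)" for y
  have lnb: "ln (bet i n y) = h y" if "0 < y" "y < 1" for y
    using that c unfolding bet_def h_def c_def[symmetric]
    by (simp add: ln_mult ln_realpow)
  have bpos: "0 < bet i n y" if "0 < y" "y < 1" for y
    using that c unfolding bet_def c_def[symmetric] by simp
  have iff: "1 < bet i n y \<longleftrightarrow> 0 < h y" if "0 < y" "y < 1" for y
    using bpos[OF that] lnb[OF that] by (metis ln_gt_zero_iff)
  have "convex_on {0<..<1} (\<lambda>y. - h y)"
  proof (rule convex_on_realI[where f'="\<lambda>y. - (real (i-1) / y) + real (n-i) / (1-y)"])
    show "connected {0<..<1::real}" by simp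
    show "((\<lambda>y. - h y) has_real_derivative - (real (i-1) / y) + real (n-i) / (1-y)) (at y)"
      if "y \<in> {0<..<1}" for y
      using that unfolding h_def by (auto intro!: derivative_eq_intros simp: field_simps)
    show "- (real (i-1) / y) + real (n-i) / (1-y) \<le> - (real (i-1) / y') + real (n-i) / (1-y')"
      if "y \<in> {0<..<1}" "y' \<in> {0<..<1}" "y \<le> y'" for y y'
    proof -
      have "real (i-1) / y' \<le> real (i-1) / y" using that by (intro divide_left_mono) auto
      moreover have "real (n-i) / (1-y) \<le> real (n-i) / (1-y')" using that by (intro divide_left_mono) auto
      ultimately show ?thesis by simp
    qed
  qed
  then have cc: "concave_on {0<..<1} h" by (simp add: concave_on_def)
  have "h u * (x - v) + h x * (v - u) \<le> h v * (x - u)"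
    using concave3[OF cc] uvx by auto
  moreover have "0 < h u" "0 < h x" using iff bu bx uvx by auto
  ultimately have "0 < h v * (x - u)"
    using uvx by (smt (verit) mult_pos_pos)
  then have "0 < h v" using uvx by (simp add: zero_less_mult_iff)
  then show ?thesis using iff uvx by auto
qed

lemma main_ineq:
  fixes Q T g :: "real \<Rightarrow> real" and D :: "real set"
  assumes intQ: "integrable LL Q"
    and Qmono: "\<And>u v. 0 < u \<Longrightarrow> u \<le> v \<Longrightarrow> v < 1 \<Longrightarrow> Q u \<le> Q v"
    and i: "2 \<le> i" "i \<le> n"
    and intT: "integrable LL T" "integrable LL (\<lambda>u. T u * bet i n u)"
    and Tw: "integral\<^sup>L LL T \<le> integral\<^sup>L LL (\<lambda>u. T u * bet i n u)"
    and Tmono: "\<And>u v. 0 < u \<Longrightarrow> u < v \<Longrightarrow> v < 1 \<Longrightarrow> T u < T v"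
    and conc: "concave_on D g" and TD: "\<And>u. 0 < u \<Longrightarrow> u < 1 \<Longrightarrow> T u \<in> D"
    and QgT: "\<And>u. 0 < u \<Longrightarrow> u < 1 \<Longrightarrow> Q u = g (T u)"
  shows "integral\<^sup>L LL Q \<le> integral\<^sup>L LL (\<lambda>u. bet i n u * Q u)"
proof -
  have i1: "1 \<le> i" using i by auto
  define w where "w u = bet i n u - 1" for u
  have intbQ: "integrable LL (\<lambda>u. bet i n u * Q u)" by (rule int_betQ[OF intQ])
  have intw: "integrable LL w" unfolding w_def using bet_int[OF i1 i(2)] LL_int_const by auto
  have intw0: "integral\<^sup>L LL w = 0" unfolding w_def
    using bet_int[OF i1 i(2)] LL_int_const LL_const by (subst Bochner_Integration.integral_diff) auto
  have intwQ: "integrable LL (\<lambda>u. w u * Q u)"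
    unfolding w_def using intbQ intQ by (simp add: left_diff_distrib)
  have key: "integral\<^sup>L LL (\<lambda>u. bet i n u * Q u) - integral\<^sup>L LL Q = integral\<^sup>L LL (\<lambda>u. w u * Q u)"
    unfolding w_def using intbQ intQ by (simp add: left_diff_distrib)
  have sp: "\<And>u. u \<in> space LL \<longleftrightarrow> 0 < u \<and> u < 1" by (simp add: LL_space)
  define S where "S = {u. 0 < u \<and> u < 1 \<and> 1 < bet i n u}"
  have goal: "0 \<le> integral\<^sup>L LL (\<lambda>u. w u * Q u)"
  proof (cases "\<exists>c. S \<subseteq> {c}")
    case True
    then obtain c where c: "S \<subseteq> {c}" by blast
    have AEc: "AE u in LL. u \<noteq> c"
      using AE_lborel_singleton[of c] by (subst AE_restrict_space_iff) (auto elim: AE_mp)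
    have AEw: "AE u in LL. 0 \<le> - w u"
      using AEc
    proof (rule AE_mp)
      show "AE u in LL. u \<noteq> c \<longrightarrow> 0 \<le> - w u"
      proof (rule AE_I2)
        fix u assume "u \<in> space LL"
        then show "u \<noteq> c \<longrightarrow> 0 \<le> - w u" using c unfolding S_def w_def sp by auto
      qed
    qed
    have "integral\<^sup>L LL (\<lambda>u. - w u) = 0" using intw0 by simp
    then have "AE u in LL. - w u = 0"
      using integral_nonneg_eq_0_iff_AE[of LL "\<lambda>u. - w u"] intw AEw by simp
    then have "AE u in LL. w u * Q u = 0" by (rule AE_mp) (intro AE_I2, simp)
    then have "integral\<^sup>L LL (\<lambda>u. w u * Q u) = integral\<^sup>L LL (\<lambda>u. 0)"
      by (intro integral_cong_AE) (use intwQ in auto)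
    then show ?thesis by simp
  next
    case False
    have "S \<noteq> {}"
    proof
      assume "S = {}"
      then have "S \<subseteq> {0}" by simp
      then show False using False by (rule_tac notE[OF False], rule_tac exI)
    qed
    then obtain s0 where s0: "s0 \<in> S" by (meson ex_in_conv)
    have "\<not> S \<subseteq> {s0}" using False by (rule_tac notI, rule_tac notE[OF False], rule_tac exI)
    then obtain s3 where s3: "s3 \<in> S" "s3 \<noteq> s0" unfolding subset_iff by auto
    define s1 where "s1 = min s0 s3"
    define s2 where "s2 = max s0 s3"
    have s: "s1 \<in> S" "s2 \<in> S" "s1 < s2" using s0 s3 unfolding s1_def s2_def min_def max_def by auto
    have Sne: "S \<noteq> {}" using s by auto
    have Sbdd: "bdd_below S" "bdd_above S" unfolding S_def by (auto intro!: bdd_belowI[of _ 0] bdd_aboveI[of _ 1])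
    define a where "a = Inf S"
    define b where "b = Sup S"
    have ab: "a < b"
    proof -
      have "a \<le> s1" unfolding a_def using s Sbdd by (intro cInf_lower) auto
      moreover have "s2 \<le> b" unfolding b_def using s Sbdd by (intro cSup_upper) auto
      ultimately show ?thesis using s by auto
    qed
    have b1: "b \<le> 1" unfolding b_def using Sne by (intro cSup_least) (auto simp: S_def)
    have P1: "w u \<le> 0" if "0 < u" "u < 1" "u < a" for u
    proof -
      have "u \<notin> S"
      proof
        assume "u \<in> S" then have "a \<le> u" unfolding a_def using Sbdd by (intro cInf_lower) auto
        then show False using that by auto
      qed
      then show ?thesis using that unfolding S_def w_def by auto
    qed
    have P2: "w u \<le> 0" if "0 < u" "u < 1" "b < u" for u
    proof -
      have "u \<notin> S"
      proof
        assume "u \<in> S" then have "u \<le> b" unfolding b_def using Sbdd by (intro cSup_upper) auto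
        then show False using that by auto
      qed
      then show ?thesis using that unfolding S_def w_def by auto
    qed
    have P3: "0 < w u" if "a < u" "u < b" for u
    proof -
      have "Inf S < u" using that a_def by simp
      then obtain x1 where x1: "x1 \<in> S" "x1 < u" using cInf_less_iff[OF Sne Sbdd(1)] by blast
      have "u < Sup S" using that b_def by simp
      then obtain x2 where x2: "x2 \<in> S" "u < x2" using less_cSup_iff[OF Sne Sbdd(2)] by blast
      have "1 < bet i n u"
        using bet_qc[OF i1 i(2), of x1 u x2] x1 x2 unfolding S_def by auto
      then show ?thesis unfolding w_def by simp
    qed
    have a0: "0 < a"
    proof -
      have "isCont (bet i n) 0" using bet_cont[of UNIV i n] by (simp add: continuous_on_eq_continuous_at)
      moreover have "bet i n 0 = 0" unfolding bet_def using i by simp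
      ultimately have "((bet i n) \<longlongrightarrow> 0) (at 0)" by (simp add: isCont_def)
      then have "eventually (\<lambda>u. bet i n u < 1) (at 0)" by (rule order_tendstoD) simp
      then obtain d where d0: "0 < d" and d1: "\<forall>u\<in>UNIV. u \<noteq> 0 \<and> dist u 0 < d \<longrightarrow> bet i n u < 1"
        unfolding eventually_at by blast
      have d: "0 < d" "\<And>u. u \<noteq> 0 \<Longrightarrow> dist u 0 < d \<Longrightarrow> bet i n u < 1" using d0 d1 by auto
      have "d \<le> a" unfolding a_def
      proof (rule cInf_greatest[OF Sne])
        fix s assume "s \<in> S"
        then have "0 < s" "1 < bet i n s" unfolding S_def by auto
        show "d \<le> s"
        proof (rule ccontr)
          assume "\<not> d \<le> s"
          then have "bet i n s < 1" using d(2)[of s] \<open>0 < s\<close> by (simp add: dist_real_def)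
          then show False using \<open>1 < bet i n s\<close> by simp
        qed
      qed
      then show ?thesis using d by simp
    qed
    show ?thesis
    proof (cases "b = 1")
      case True
      have pw: "0 \<le> (Q u - Q a) * w u" if "0 < u" "u < 1" for u
      proof (cases u a rule: linorder_cases)
        case less
        then show ?thesis using Qmono[of u a] P1[of u] that ab b1 by (intro mult_nonpos_nonpos) auto
      next
        case equal then show ?thesis by simp
      next
        case greater
        then show ?thesis using Qmono[of a u] P3[of u] that a0 True by (intro mult_nonneg_nonneg) auto
      qed
      have "integral\<^sup>L LL (\<lambda>u. w u * Q u) = integral\<^sup>L LL (\<lambda>u. (Q u - Q a) * w u + Q a * w u)"
        by (simp add: algebra_simps)
      also have "\<dots> = integral\<^sup>L LL (\<lambda>u. (Q u - Q a) * w u) + integral\<^sup>L LL (\<lambda>u. Q a * w u)"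
      proof (rule Bochner_Integration.integral_add)
        show "integrable LL (\<lambda>u. Q a * w u)" using intw by simp
        have "integrable LL (\<lambda>u. w u * Q u - Q a * w u)" using intwQ intw by simp
        then show "integrable LL (\<lambda>u. (Q u - Q a) * w u)" by (simp add: algebra_simps)
      qed
      also have "integral\<^sup>L LL (\<lambda>u. Q a * w u) = 0" using intw0 by simp
      also have "0 \<le> integral\<^sup>L LL (\<lambda>u. (Q u - Q a) * w u)"
        by (rule integral_nonneg_AE, rule AE_I2) (use pw sp in auto)
      ultimately show ?thesis by simp
    next
      case False
      then have b1': "b < 1" using b1 by simp
      define A where "A = T a"
      define B where "B = T b"
      have AB: "A < B" unfolding A_def B_def using Tmono[of a b] a0 ab b1' by auto
      define sl where "sl = (Q b - Q a) / (B - A)"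
      have sl0: "0 \<le> sl" unfolding sl_def using Qmono[of a b] a0 ab b1' AB by auto
      define l where "l u = Q a + sl * (T u - A)" for u
      have lAB: "l u * (B - A) = Q a * (B - T u) + Q b * (T u - A)" for u
        unfolding l_def sl_def using AB by (simp add: field_simps)
      have Qa: "Q a = g A" "Q b = g B" unfolding A_def B_def using QgT a0 ab b1' by auto
      have pw: "0 \<le> (Q u - l u) * w u" if u: "0 < u" "u < 1" for u
      proof -
        have Qu: "Q u = g (T u)" using QgT u by simp
        have TuD: "T u \<in> D" "A \<in> D" "B \<in> D" unfolding A_def B_def using TD u a0 ab b1' by auto
        consider "u < a" | "u = a" | "a < u \<and> u < b" | "u = b" | "b < u" by linarith
        then show ?thesis
        proof cases
          case 1
          have "T u < A" unfolding A_def using Tmono[of u a] u 1 ab b1' by auto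
          then have "g (T u) * (B - A) + g B * (A - T u) \<le> g A * (B - T u)"
            using concave3[OF conc TuD(1) TuD(3), of A] AB by simp
          then have "Q u * (B - A) \<le> l u * (B - A)" unfolding lAB Qu Qa by (simp add: algebra_simps)
          then have "Q u \<le> l u" using AB by simp
          then show ?thesis using P1[OF u 1] by (intro mult_nonpos_nonpos) auto
        next
          case 2 then show ?thesis unfolding l_def A_def by simp
        next
          case 3
          have "A < T u" "T u < B" unfolding A_def B_def using Tmono u 3 a0 b1' by auto
          then have "g A * (B - T u) + g B * (T u - A) \<le> g (T u) * (B - A)"
            using concave3[OF conc TuD(2) TuD(3)] by simp
          then have "l u * (B - A) \<le> Q u * (B - A)" unfolding lAB Qu Qa by simp
          then have "l u \<le> Q u" using AB by simp
          then show ?thesis using P3[of u] 3 by (intro mult_nonneg_nonneg) auto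
        next
          case 4
          have "l b * (B - A) = Q b * (B - A)" using lAB[of b] unfolding B_def by simp
          then have "l b = Q b" using AB by simp
          then show ?thesis using 4 by simp
        next
          case 5
          have "B < T u" unfolding B_def using Tmono[of b u] u 5 a0 ab by auto
          then have "g A * (T u - B) + g (T u) * (B - A) \<le> g B * (T u - A)"
            using concave3[OF conc TuD(2) TuD(1), of B] AB by simp
          then have "Q u * (B - A) \<le> l u * (B - A)" unfolding lAB Qu Qa by (simp add: algebra_simps)
          then have "Q u \<le> l u" using AB by simp
          then show ?thesis using P2[OF u 5] by (intro mult_nonpos_nonpos) auto
        qed
      qed
      have intTw: "integrable LL (\<lambda>u. T u * w u)"
        unfolding w_def using intT by (simp add: right_diff_distrib)
      have intTw0: "integral\<^sup>L LL (\<lambda>u. T u * w u) = integral\<^sup>L LL (\<lambda>u. T u * bet i n u) - integral\<^sup>L LL T"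
        unfolding w_def using intT by (simp add: right_diff_distrib)
      have lw: "(\<lambda>u. l u * w u) = (\<lambda>u. (Q a - sl * A) * w u + sl * (T u * w u))"
        unfolding l_def by (simp add: fun_eq_iff algebra_simps)
      have intlw: "integrable LL (\<lambda>u. l u * w u)" unfolding lw using intw intTw by simp
      have intlw0: "0 \<le> integral\<^sup>L LL (\<lambda>u. l u * w u)"
        unfolding lw using intw intTw intw0 intTw0 Tw sl0 by simp
      have "integral\<^sup>L LL (\<lambda>u. w u * Q u) = integral\<^sup>L LL (\<lambda>u. (Q u - l u) * w u + l u * w u)"
        by (simp add: algebra_simps)
      also have "\<dots> = integral\<^sup>L LL (\<lambda>u. (Q u - l u) * w u) + integral\<^sup>L LL (\<lambda>u. l u * w u)"
      proof (rule Bochner_Integration.integral_add)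
        show "integrable LL (\<lambda>u. l u * w u)" by (rule intlw)
        have "integrable LL (\<lambda>u. w u * Q u - l u * w u)" using intwQ intlw by simp
        then show "integrable LL (\<lambda>u. (Q u - l u) * w u)" by (simp add: algebra_simps)
      qed
      also have "0 \<le> integral\<^sup>L LL (\<lambda>u. (Q u - l u) * w u)"
        by (rule integral_nonneg_AE, rule AE_I2) (use pw sp in auto)
      ultimately show ?thesis using intlw0 by simp
    qed
  qed
  show ?thesis using key goal by simp
qed

lemma bet11: "bet 1 1 u = 1" by (simp add: bet_def)

lemma Digamma_nat: "1 \<le> k \<Longrightarrow> Digamma (real k) = harm (k-1) - euler_mascheroni"
  using Digamma_of_nat[of "k-1", where 'a=real] by simp

lemma logistic_logit: "0 < u \<Longrightarrow> u < 1 \<Longrightarrow> logistic (- ln (1-u) - - ln u) = u"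
proof -
  assume u: "0 < u" "u < 1"
  have E: "exp (- (- ln (1-u) - - ln u)) = (1-u) / u"
    using u by (simp add: exp_diff)
  have "logistic (- ln (1-u) - - ln u) = 1 / (1 + (1-u) / u)"
    unfolding logistic_def E by simp
  also have "\<dots> = u" using u by (simp add: field_simps)
  finally show ?thesis .
qed

lemma expcdf_log: "u < 1 \<Longrightarrow> expcdf (- ln (1-u)) = u"
  unfolding expcdf_def by simp

theorem corollary10:
  fixes M :: "real measure" and i n :: nat
  assumes "real_distribution M"
    and "integrable M (\<lambda>x. x)"
    and "1 \<le> i" and "i \<le> n"
    and "(concave_on {0<..<1} (quantile (cdf M)) \<and> real i / (real n + 1) \<ge> 1 / 2)
       \<or> (concave_on UNIV (quantile (cdf M) \<circ> logistic)
            \<and> Digamma (real i) - Digamma (real (n - i + 1)) \<ge> 0)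
       \<or> (concave_on {0<..} (quantile (cdf M) \<circ> expcdf)
            \<and> (\<Sum>k = n - i + 1..n. 1 / real k) \<ge> 1)"
  shows "(\<integral>x. order_stat i n x \<partial>(PiM {..<n} (\<lambda>_. M))) \<ge> (\<integral>x. x \<partial>M)"
proof -
  note M = assms(1) and intM = assms(2) and i = assms(3,4) and H = assms(5)
  let ?Q = "quantile (cdf M)"
  note R = reduction[OF M intM i]
  interpret cdf_distribution M using M by (simp add: cdf_distribution_def)
  have QI: "?Q = (\<lambda>\<omega>. Inf {x. \<omega> \<le> cdf M x})" by (simp add: fun_eq_iff quantile_def)
  have Qmono: "\<And>u v. 0 < u \<Longrightarrow> u \<le> v \<Longrightarrow> v < 1 \<Longrightarrow> ?Q u \<le> ?Q v"
    unfolding QI using mono_I by (auto elim!: mono_onD)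
  have intQ: "integrable LL ?Q" by (rule R(3))
  have ineq: "integral\<^sup>L LL ?Q \<le> integral\<^sup>L LL (\<lambda>u. bet i n u * ?Q u)"
  proof (cases "n = 1")
    case True
    then have "i = 1" using i by simp
    then show ?thesis using True by (simp add: bet_def)
  next
    case False
    then have n2: "2 \<le> n" using i by simp
    show ?thesis
    proof (cases "i = 1")
      case True
      have False using H
      proof (elim disjE conjE)
        assume "1 / 2 \<le> real i / (real n + 1)"
        then show False using True n2 by (simp add: field_simps)
      next
        assume a: "0 \<le> Digamma (real i) - Digamma (real (n - i + 1))"
        have b: "Digamma (real i) = harm 0 - euler_mascheroni" using Digamma_nat[of i] True by simp
        have c: "Digamma (real (n - i + 1)) = harm (n-1) - euler_mascheroni"
          using Digamma_nat[of "n - i + 1"] True n2 by simp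
        have d: "0 < (harm (n-1) :: real)" using n2 by (intro harm_pos) auto
        have e: "harm 0 = (0::real)" by (simp add: harm_def)
        from a b c d e show False by linarith
      next
        assume "1 \<le> (\<Sum>k = n - i + 1..n. 1 / real k)"
        then show False using True n2 by simp
      qed
      then show ?thesis ..
    next
      case False
      then have i2: "2 \<le> i" using i by simp
      have i11: "(1::nat) \<le> 1" "(1::nat) \<le> 1" by simp_all
      from H show ?thesis
      proof (elim disjE conjE)
        assume conc: "concave_on {0<..<1} ?Q" and c1: "1 / 2 \<le> real i / (real n + 1)"
        have e: "(\<lambda>u. u * bet 1 1 u) = (\<lambda>u. u)" by (simp add: bet_def fun_eq_iff)
        show ?thesis
        proof (rule main_ineq[OF intQ Qmono i2 i(2), where T="\<lambda>u. u" and g="?Q" and D="{0<..<1}"])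
          show "integrable LL (\<lambda>u. u)" using int_id(1)[OF i11] unfolding e .
          show "integrable LL (\<lambda>u. u * bet i n u)" using int_id(1)[OF i] .
          have h1: "integral\<^sup>L LL (\<lambda>u. u) = 1 / 2" using int_id(2)[OF i11] unfolding e by simp
          note h2 = int_id(2)[OF i]
          from h1 h2 c1 show "integral\<^sup>L LL (\<lambda>u. u) \<le> integral\<^sup>L LL (\<lambda>u. u * bet i n u)"
            by linarith
        qed (use conc in auto)
      next
        assume conc: "concave_on UNIV (?Q \<circ> logistic)"
          and c2: "0 \<le> Digamma (real i) - Digamma (real (n - i + 1))"
        let ?T = "\<lambda>u::real. - ln (1-u) - - ln u"
        have e1: "(\<lambda>u. - ln (1-u) * bet 1 1 u) = (\<lambda>u. - ln (1-u))" by (simp add: bet_def fun_eq_iff)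
        have e0: "(\<lambda>u. - ln u * bet 1 1 u) = (\<lambda>u. - ln u)" by (simp add: bet_def fun_eq_iff)
        have iT1: "integrable LL (\<lambda>u. - ln (1-u))" using int_log1(1)[OF i11] unfolding e1 .
        have iT0: "integrable LL (\<lambda>u. - ln u)" using int_log0(1)[OF i11] unfolding e0 .
        have eT: "(\<lambda>u. ?T u * bet i n u) = (\<lambda>u. - ln (1-u) * bet i n u - - ln u * bet i n u)"
          by (simp add: fun_eq_iff algebra_simps)
        have dg: "harm (n-i) \<le> (harm (i-1) :: real)"
          using c2 Digamma_nat[of i] Digamma_nat[of "n - i + 1"] i by simp
        show ?thesis
        proof (rule main_ineq[OF intQ Qmono i2 i(2), where T="?T" and g="?Q \<circ> logistic" and D=UNIV])
          show "integrable LL ?T" using iT1 iT0 by simp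
          show "integrable LL (\<lambda>u. ?T u * bet i n u)" unfolding eT using int_log1(1)[OF i] int_log0(1)[OF i] by simp
          have "integral\<^sup>L LL ?T = 0"
            using iT1 iT0 int_log1(2)[OF i11] int_log0(2)[OF i11] unfolding e1 e0 by simp
          moreover have "integral\<^sup>L LL (\<lambda>u. ?T u * bet i n u) = harm (i-1) - harm (n-i)"
            unfolding eT using int_log1[OF i] int_log0[OF i] by simp
          ultimately show "integral\<^sup>L LL ?T \<le> integral\<^sup>L LL (\<lambda>u. ?T u * bet i n u)" using dg by simp
          show "?T u < ?T v" if "0 < u" "u < v" "v < 1" for u v
          proof -
            have "ln u < ln v" using that by simp
            moreover have "ln (1-v) < ln (1-u)" using that by simp
            ultimately show ?thesis by simp
          qed
          show "?Q u = (?Q \<circ> logistic) (?T u)" if "0 < u" "u < 1" for u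
            using logistic_logit[OF that] by simp
        qed (use conc in auto)
      next
        assume conc: "concave_on {0<..} (?Q \<circ> expcdf)"
          and c3: "1 \<le> (\<Sum>k = n - i + 1..n. 1 / real k)"
        let ?T = "\<lambda>u::real. - ln (1-u)"
        have e1: "(\<lambda>u. - ln (1-u) * bet 1 1 u) = (\<lambda>u. - ln (1-u))" by (simp add: bet_def fun_eq_iff)
        have hs: "(\<Sum>k = n - i + 1..n. 1 / real k) = harm n - harm (n - i)"
          using harm_sum2[of "n - i + 1" n] i by simp
        show ?thesis
        proof (rule main_ineq[OF intQ Qmono i2 i(2), where T="?T" and g="?Q \<circ> expcdf" and D="{0<..}"])
          show "integrable LL ?T" using int_log1(1)[OF i11] unfolding e1 .
          show "integrable LL (\<lambda>u. ?T u * bet i n u)" using int_log1(1)[OF i] .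
          have "integral\<^sup>L LL ?T = 1"
            using int_log1(2)[OF i11] unfolding e1 by (simp add: harm_def)
          then show "integral\<^sup>L LL ?T \<le> integral\<^sup>L LL (\<lambda>u. ?T u * bet i n u)"
            using int_log1(2)[OF i] c3 hs by simp
          show "?T u < ?T v" if "0 < u" "u < v" "v < 1" for u v
            using that by simp
          show "?T u \<in> {0<..}" if "0 < u" "u < 1" for u
            using that by simp
          show "?Q u = (?Q \<circ> expcdf) (?T u)" if "0 < u" "u < 1" for u
            using expcdf_log[of u] that by simp
        qed (use conc in auto)
      qed
    qed
  qed
  then show ?thesis using R(1,2) by simp
qed

end
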